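(* There exist $2^{\mathfrak{c}}$ pairwise non-homeomorphic topologies $\tau\in\mathcal{L}$ such that $(\mathbb{R},\tau)$ is a Baire space which is not regular.
   Context: $\mathfrak{c}=|\mathbb{R}|$. $\eta$ denotes the Euclidean topology on $\mathbb{R}$. $\mathcal{L}$ denotes the family of all Hausdorff topologies $\tau$ on the set $\mathbb{R}$ with $\tau\subset\eta$. *)

theory Defs
  imports "HOL-Analysis.Analysis" "HOL-Library.Equipollence"
begin

definition baire_space :: "'a topology \<Rightarrow> bool" where
  "baire_space X \<longleftrightarrow>
     (\<forall>U :: nat \<Rightarrow> 'a set.
        (\<forall>n. openin X (U n) \<and> X closure_of (U n) = topspace X)
        \<longrightarrow> X closure_of (\<Inter>n. U n) = topspace X)"

text \<open>The family L: Hausdorff topologies on the set R coarser than the Euclidean topology.\<close>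
definition coarser_Hausdorff_topologies :: "real topology set" where
  "coarser_Hausdorff_topologies =
     {\<tau>. topspace \<tau> = UNIV \<and> Hausdorff_space \<tau> \<and> (\<forall>S. openin \<tau> S \<longrightarrow> open S)}"

end

theory Submission
  imports Defs
begin

lemma lepoll_total: "A \<lesssim> B \<or> B \<lesssim> A"
  using ordLeq_total[OF card_of_Well_order card_of_Well_order, of A B]
  by (simp add: lepoll_def card_of_ordLeq[symmetric])

lemma times_self_infinite: "infinite A \<Longrightarrow> A \<times> A \<approx> A"
  using card_of_Times_same_infinite eqpoll_iff_card_of_ordIso by blast

lemma counting:
  fixes G :: "'a set" and F :: "'a set"
  assumes G: "G \<approx> (UNIV :: real set set)" and FG: "F \<subseteq> G"
    and GF: "G \<lesssim> F \<times> (UNIV::real set)"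
  shows "F \<approx> (UNIV :: real set set)"
proof -
  have RR: "(UNIV::real set) \<times> (UNIV::real set) \<approx> (UNIV::real set)"
    by (rule times_self_infinite) (simp add: infinite_UNIV_char_0)
  have F1: "F \<lesssim> (UNIV :: real set set)"
    using FG G lepoll_trans2 subset_imp_lepoll by blast
  have "(UNIV :: real set set) \<lesssim> F"
  proof (cases "F \<lesssim> (UNIV::real set)")
    case True
    have "(UNIV :: real set set) \<lesssim> G" using G eqpoll_imp_lepoll eqpoll_sym by blast
    also have "\<dots> \<lesssim> F \<times> (UNIV::real set)" by (rule GF)
    also have "\<dots> \<lesssim> (UNIV::real set) \<times> (UNIV::real set)"
      using True times_lepoll_mono by blast
    also have "\<dots> \<lesssim> (UNIV::real set)" using RR eqpoll_imp_lepoll by blast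
    finally have "Pow (UNIV::real set) \<lesssim> (UNIV::real set)" by simp
    then show ?thesis using lesspoll_Pow_self[of "UNIV::real set"]
      by (meson lepoll_antisym lesspoll_def)
  next
    case False
    then have RF: "(UNIV::real set) \<lesssim> F" using lepoll_total by blast
    have inf: "infinite F"
      using RF infinite_UNIV_char_0[where 'a=real] infinite_le_lepoll lepoll_trans by metis
    have "(UNIV :: real set set) \<lesssim> G" using G eqpoll_imp_lepoll eqpoll_sym by blast
    also have "\<dots> \<lesssim> F \<times> (UNIV::real set)" by (rule GF)
    also have "\<dots> \<lesssim> F \<times> F"
      using RF times_lepoll_mono by blast
    also have "\<dots> \<lesssim> F" using times_self_infinite[OF inf] eqpoll_imp_lepoll by blast
    finally show ?thesis .
  qed
  then show ?thesis using F1 lepoll_antisym by blast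
qed

lemma lepollI: "inj_on f A \<Longrightarrow> f ` A \<subseteq> B \<Longrightarrow> A \<lesssim> B"
  unfolding lepoll_def by blast

lemma funs_nat_real_lepoll: "(UNIV :: (nat \<Rightarrow> real) set) \<lesssim> (UNIV :: real set)"
proof -
  obtain e :: "real \<Rightarrow> nat set" where e: "inj e"
    using nat_sets_eqpoll_reals eqpoll_sym eqpoll_imp_lepoll
    by (metis lepoll_def inj_on_def)
  define H where "H = (\<lambda>h::nat\<Rightarrow>real. {prod_encode (n,m) | n m. m \<in> e (h n)})"
  have "inj H"
  proof (rule injI)
    fix h1 h2 assume "H h1 = H h2"
    have "m \<in> e (h1 n) \<longleftrightarrow> m \<in> e (h2 n)" for n m
    proof -
      have "m \<in> e (h1 n) \<longleftrightarrow> prod_encode (n,m) \<in> H h1"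
        unfolding H_def by (auto simp: prod_encode_eq)
      moreover have "m \<in> e (h2 n) \<longleftrightarrow> prod_encode (n,m) \<in> H h2"
        unfolding H_def by (auto simp: prod_encode_eq)
      ultimately show ?thesis using \<open>H h1 = H h2\<close> by simp
    qed
    then have "\<forall>n. e (h1 n) = e (h2 n)" by blast
    then show "h1 = h2" using e by (auto simp: inj_def)
  qed
  then have "(UNIV :: (nat \<Rightarrow> real) set) \<lesssim> (UNIV :: nat set set)"
    unfolding lepoll_def by blast
  also have "\<dots> \<approx> (UNIV :: real set)" by (rule nat_sets_eqpoll_reals)
  finally show ?thesis .
qed

lemma rats_funs_lepoll: "(\<rat> \<rightarrow>\<^sub>E (UNIV::real set)) \<lesssim> (UNIV :: real set)"
proof -
  have "\<rat> \<lesssim> (UNIV::nat set)"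
    using countable_rat unfolding lepoll_def countable_def by blast
  then have "(\<rat> \<rightarrow>\<^sub>E (UNIV::real set)) \<lesssim> ((UNIV::nat set) \<rightarrow>\<^sub>E (UNIV::real set))"
    by (rule lepoll_funcset_left[rotated]) simp
  also have "\<dots> = (UNIV :: (nat \<Rightarrow> real) set)" by simp
  also have "\<dots> \<lesssim> (UNIV :: real set)" by (rule funs_nat_real_lepoll)
  finally show ?thesis .
qed

lemma coarser_continuous:
  assumes "continuous_map \<tau> \<sigma> f" "topspace \<tau> = UNIV" "\<forall>S. openin \<tau> S \<longrightarrow> open S"
  shows "continuous_map euclideanreal \<sigma> f"
  using assms unfolding continuous_map_def by auto

lemma class_small:
  assumes "\<tau> \<in> coarser_Hausdorff_topologies"
  shows "{\<sigma> \<in> coarser_Hausdorff_topologies. \<tau> homeomorphic_space \<sigma>} \<lesssim> (UNIV::real set)"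
proof -
  let ?C = "{\<sigma> \<in> coarser_Hausdorff_topologies. \<tau> homeomorphic_space \<sigma>}"
  define g :: "real topology \<Rightarrow> real \<Rightarrow> real"
    where "g = (\<lambda>\<sigma>. SOME g. \<exists>f. homeomorphic_maps \<tau> \<sigma> f g)"
  have gprop: "\<exists>f. homeomorphic_maps \<tau> \<sigma> f (g \<sigma>)" if "\<sigma> \<in> ?C" for \<sigma>
  proof -
    have "\<exists>g f. homeomorphic_maps \<tau> \<sigma> f g"
      using that unfolding homeomorphic_space_def by blast
    then show ?thesis unfolding g_def by (rule someI_ex)
  qed
  have tau: "topspace \<tau> = UNIV" "\<forall>S. openin \<tau> S \<longrightarrow> open S" "Hausdorff_space \<tau>"
    using assms by (auto simp: coarser_Hausdorff_topologies_def)
  have opn: "openin \<sigma> S \<longleftrightarrow> openin \<tau> (g \<sigma> ` S)" if sC: "\<sigma> \<in> ?C" for \<sigma> S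
  proof -
    obtain f where hm: "homeomorphic_maps \<tau> \<sigma> f (g \<sigma>)" using gprop[OF sC] by blast
    have ts: "topspace \<sigma> = UNIV" using sC by (auto simp: coarser_Hausdorff_topologies_def)
    have fg: "\<And>x. g \<sigma> (f x) = x" "\<And>y. f (g \<sigma> y) = y"
    proof -
      have "\<forall>x\<in>topspace \<tau>. g \<sigma> (f x) = x" "\<forall>y\<in>topspace \<sigma>. f (g \<sigma> y) = y"
        using hm unfolding homeomorphic_maps_def by blast+
      then show "\<And>x. g \<sigma> (f x) = x" "\<And>y. f (g \<sigma> y) = y" using ts tau(1) by simp_all
    qed
    have im: "g \<sigma> ` S = {x. f x \<in> S}"
    proof
      show "g \<sigma> ` S \<subseteq> {x. f x \<in> S}" using fg by auto
      show "{x. f x \<in> S} \<subseteq> g \<sigma> ` S"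
      proof
        fix x assume "x \<in> {x. f x \<in> S}"
        then show "x \<in> g \<sigma> ` S" using fg(1)[of x] by (metis imageI mem_Collect_eq)
      qed
    qed
    show ?thesis
    proof
      assume "openin \<sigma> S"
      moreover have "continuous_map \<tau> \<sigma> f" using hm unfolding homeomorphic_maps_def by blast
      ultimately have "openin \<tau> {x \<in> topspace \<tau>. f x \<in> S}"
        unfolding continuous_map_def by blast
      then show "openin \<tau> (g \<sigma> ` S)" using tau im by simp
    next
      assume "openin \<tau> (g \<sigma> ` S)"
      then have "openin \<tau> {x. f x \<in> S}" using im by simp
      moreover have "continuous_map \<sigma> \<tau> (g \<sigma>)" using hm unfolding homeomorphic_maps_def by blast
      ultimately have "openin \<sigma> {y \<in> topspace \<sigma>. g \<sigma> y \<in> {x. f x \<in> S}}"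
        unfolding continuous_map_def by blast
      moreover have "{y \<in> topspace \<sigma>. g \<sigma> y \<in> {x. f x \<in> S}} = S"
        using fg ts by auto
      ultimately show "openin \<sigma> S" by simp
    qed
  qed
  have cont: "continuous_map euclideanreal \<tau> (g \<sigma>)" if sC2: "\<sigma> \<in> ?C" for \<sigma>
  proof -
    have "topspace \<sigma> = UNIV" "\<forall>S. openin \<sigma> S \<longrightarrow> open S"
      using that by (auto simp: coarser_Hausdorff_topologies_def)
    then show ?thesis
    proof -
      obtain f where "homeomorphic_maps \<tau> \<sigma> f (g \<sigma>)" using gprop[OF sC2] by blast
      then have "continuous_map \<sigma> \<tau> (g \<sigma>)" unfolding homeomorphic_maps_def by blast
      then show ?thesis by (rule coarser_continuous) (use \<open>topspace \<sigma> = UNIV\<close> \<open>\<forall>S. openin \<sigma> S \<longrightarrow> open S\<close> in auto)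
    qed
  qed
  have I: "inj_on (\<lambda>\<sigma>. restrict (g \<sigma>) \<rat>) ?C"
  proof (rule inj_onI)
    fix \<sigma>1 \<sigma>2 assume s1: "\<sigma>1 \<in> ?C" and s2: "\<sigma>2 \<in> ?C"
      and eq: "restrict (g \<sigma>1) \<rat> = restrict (g \<sigma>2) \<rat>"
    have "g \<sigma>1 x = g \<sigma>2 x" for x
    proof (rule forall_in_closure_of_eq[of x euclideanreal \<rat> \<tau>])
      show "x \<in> euclideanreal closure_of \<rat>" by (simp add: Rats_closure_real euclidean_closure_of)
      show "Hausdorff_space \<tau>" by (rule tau(3))
      show "continuous_map euclideanreal \<tau> (g \<sigma>1)" by (rule cont[OF s1])
      show "continuous_map euclideanreal \<tau> (g \<sigma>2)" by (rule cont[OF s2])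
      show "\<And>x. x \<in> \<rat> \<Longrightarrow> g \<sigma>1 x = g \<sigma>2 x" using eq by (metis restrict_apply')
    qed
    then have "g \<sigma>1 = g \<sigma>2" by (rule ext)
    show "\<sigma>1 = \<sigma>2"
    proof (rule topology_eq[THEN iffD2], rule allI)
      fix S show "openin \<sigma>1 S = openin \<sigma>2 S" using opn[OF s1, of S] opn[OF s2, of S] \<open>g \<sigma>1 = g \<sigma>2\<close> by simp
    qed
  qed
  have Sb: "(\<lambda>\<sigma>. restrict (g \<sigma>) \<rat>) ` ?C \<subseteq> \<rat> \<rightarrow>\<^sub>E (UNIV::real set)"
    by (rule image_subsetI) simp
  have "?C \<lesssim> (\<rat>::real set) \<rightarrow>\<^sub>E (UNIV::real set)"
    by (rule lepollI[OF I Sb])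
  also have "\<dots> \<lesssim> (UNIV::real set)" by (rule rats_funs_lepoll)
  finally show ?thesis .
qed

definition gf :: "real \<Rightarrow> real" where
  "gf a = 3/4 + arctan a / (2*pi)"

lemma gf_bounds: "1/2 < gf a" "gf a < 1"
proof -
  have "- (pi/2) < arctan a" "arctan a < pi/2" using arctan_bounded by auto
  then have "-(1/4) < arctan a / (2*pi)" "arctan a / (2*pi) < 1/4"
    using pi_gt_zero by (auto simp: field_simps)
  then show "1/2 < gf a" "gf a < 1" unfolding gf_def by linarith+
qed

lemma gf_inj: "gf a = gf b \<Longrightarrow> a = b"
proof -
  assume "gf a = gf b"
  then have "arctan a = arctan b" unfolding gf_def using pi_gt_zero by (auto simp: field_simps)
  then show "a = b" by (simp add: arctan_eq_iff)
qed

definition DD :: "real set \<Rightarrow> real set" where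
  "DD A = {real n + h | n h. n \<ge> 1 \<and> (h = 0 \<or> h \<in> gf ` A)}"

definition openT :: "real set \<Rightarrow> real set \<Rightarrow> bool" where
  "openT A U \<longleftrightarrow> open U \<and> (0 \<in> U \<longrightarrow> (\<exists>M. \<forall>x. M < x \<and> x \<notin> DD A \<longrightarrow> x \<in> U))"

definition TT :: "real set \<Rightarrow> real topology" where
  "TT A = topology (openT A)"

lemma istop: "istopology (openT A)"
  unfolding istopology_def
proof (intro conjI allI impI)
  fix S T assume S: "openT A S" and T: "openT A T"
  show "openT A (S \<inter> T)"
    unfolding openT_def
  proof (intro conjI impI)
    show "open (S \<inter> T)" using S T by (auto simp: openT_def)
    assume "0 \<in> S \<inter> T"
    then obtain M1 M2 where "\<forall>x. M1 < x \<and> x \<notin> DD A \<longrightarrow> x \<in> S" "\<forall>x. M2 < x \<and> x \<notin> DD A \<longrightarrow> x \<in> T"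
      using S T by (auto simp: openT_def)
    then show "\<exists>M. \<forall>x. M < x \<and> x \<notin> DD A \<longrightarrow> x \<in> S \<inter> T"
      by (rule_tac x="max M1 M2" in exI) auto
  qed
next
  fix K assume K: "\<forall>S\<in>K. openT A S"
  show "openT A (\<Union>K)"
    unfolding openT_def
  proof (intro conjI impI)
    show "open (\<Union>K)" using K by (auto simp: openT_def)
    assume "0 \<in> \<Union>K"
    then obtain S where "S \<in> K" "0 \<in> S" by auto
    then obtain M where "\<forall>x. M < x \<and> x \<notin> DD A \<longrightarrow> x \<in> S"
      using K by (auto simp: openT_def)
    then show "\<exists>M. \<forall>x. M < x \<and> x \<notin> DD A \<longrightarrow> x \<in> \<Union>K"
      using \<open>S \<in> K\<close> by blast
  qed
qed

lemma openin_TT: "openin (TT A) U \<longleftrightarrow> openT A U"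
  unfolding TT_def using istop by (simp add: topology_inverse')

lemma topspace_TT: "topspace (TT A) = UNIV"
proof -
  have "openT A UNIV" by (simp add: openT_def)
  then show ?thesis unfolding topspace_def openin_TT by auto
qed

lemma openT_no0: "open U \<Longrightarrow> 0 \<notin> U \<Longrightarrow> openT A U"
  by (simp add: openT_def)

lemma frac_eq:
  assumes "real n + h1 = real m + h2" "0 \<le> h1" "h1 < 1" "0 \<le> h2" "h2 < 1"
  shows "n = m \<and> h1 = h2"
proof -
  have "\<not> n < m"
  proof
    assume "n < m" then have "real n + 1 \<le> real m" by linarith
    then show False using assms by linarith
  qed
  moreover have "\<not> m < n"
  proof
    assume "m < n" then have "real m + 1 \<le> real n" by linarith
    then show False using assms by linarith
  qed
  ultimately have "n = m" by arith
  then show ?thesis using assms(1) by simp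
qed

lemma closed_shift_nats: "closed {real n + c | n::nat. n \<ge> 1}"
proof (rule discrete_imp_closed[of 1])
  show "0 < (1::real)" by simp
  show "\<forall>x\<in>{real n + c | n::nat. n \<ge> 1}. \<forall>y\<in>{real n + c | n::nat. n \<ge> 1}. dist y x < 1 \<longrightarrow> y = x"
  proof (clarify)
    fix n m :: nat
    assume "dist (real m + c) (real n + c) < 1"
    then have "\<bar>real m - real n\<bar> < 1" by (simp add: dist_real_def)
    then have "m = n" by linarith
    then show "real m + c = real n + c" by simp
  qed
qed

lemma DD_memI: "n \<ge> 1 \<Longrightarrow> h = 0 \<or> h \<in> gf ` A \<Longrightarrow> real n + h \<in> DD A"
  unfolding DD_def by blast

lemma DD_E: "x \<in> DD A \<Longrightarrow> (\<And>n h. x = real n + h \<Longrightarrow> n \<ge> 1 \<Longrightarrow> h = 0 \<or> h \<in> gf ` A \<Longrightarrow> P) \<Longrightarrow> P"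
  unfolding DD_def by blast

lemma DD_gap:
  assumes "n \<ge> 1" "real n < x" "x < real n + 1/2"
  shows "x \<notin> DD A"
proof
  assume "x \<in> DD A"
  then obtain m h where x: "x = real m + h" and h: "h = 0 \<or> h \<in> gf ` A"
    unfolding DD_def by auto
  have h01: "h = 0 \<or> (1/2 < h \<and> h < 1)" using h gf_bounds by auto
  consider "m < n" | "m = n" | "n < m" by linarith
  then show False
  proof cases
    case 1 then have "real m + 1 \<le> real n" by linarith
    then show ?thesis using h01 x assms by linarith
  next
    case 2 then show ?thesis using h01 x assms by auto
  next
    case 3 then have "real n + 1 \<le> real m" by linarith
    then show ?thesis using h01 x assms by linarith
  qed
qed

lemma sep0:
  assumes "y \<noteq> 0"
  shows "\<exists>U V. openT A U \<and> openT A V \<and> 0 \<in> U \<and> y \<in> V \<and> disjnt U V"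
proof -
  define r where "r = min (\<bar>y\<bar>/2) 1"
  have r: "r > 0" using assms by (simp add: r_def)
  define U where "U = ball 0 r \<union> {\<bar>y\<bar>+1<..}"
  define V where "V = ball y r"
  have "openT A U" unfolding openT_def U_def
    by (intro conjI impI open_Un open_ball open_greaterThan, rule exI[of _ "\<bar>y\<bar>+1"]) auto
  moreover have "openT A V" unfolding V_def
    by (rule openT_no0) (auto simp: r_def dist_real_def)
  moreover have "disjnt U V"
    unfolding disjnt_iff
  proof (intro allI notI)
    fix z assume "z \<in> U \<and> z \<in> V"
    then have zV: "\<bar>y - z\<bar> < r" and zU: "\<bar>z\<bar> < r \<or> z > \<bar>y\<bar> + 1"
      unfolding U_def V_def by (auto simp: dist_real_def)
    have "r \<le> \<bar>y\<bar>/2" "r \<le> 1" by (auto simp: r_def)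
    moreover have "\<bar>y\<bar> \<le> \<bar>z\<bar> + \<bar>y - z\<bar>" by linarith
    moreover have "z \<le> y + \<bar>y - z\<bar>" "y \<le> \<bar>y\<bar>" by linarith+
    ultimately show False using zV zU by linarith
  qed
  moreover have "0 \<in> U" "y \<in> V" using r unfolding U_def V_def by auto
  ultimately show ?thesis by blast
qed

lemma Hausdorff_TT: "Hausdorff_space (TT A)"
  unfolding Hausdorff_space_def topspace_TT openin_TT
proof (intro allI impI)
  fix x y :: real assume "x \<in> UNIV \<and> y \<in> UNIV \<and> x \<noteq> y"
  then have xy: "x \<noteq> y" by simp
  show "\<exists>U V. openT A U \<and> openT A V \<and> x \<in> U \<and> y \<in> V \<and> disjnt U V"
  proof (cases "x = 0 \<or> y = 0")
    case True
    then show ?thesis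
    proof
      assume "x = 0" then show ?thesis using sep0[of y A] xy by auto
    next
      assume "y = 0"
      then obtain U V where "openT A U \<and> openT A V \<and> 0 \<in> U \<and> x \<in> V \<and> disjnt U V"
        using sep0[of x A] xy by auto
      then show ?thesis using \<open>y = 0\<close> by (metis disjnt_sym)
    qed
  next
    case False
    define r where "r = dist x y / 2"
    have r: "r > 0" using xy by (simp add: r_def)
    have o1: "openT A (ball x r - {0})" and o2: "openT A (ball y r - {0})"
      by (auto intro!: openT_no0 open_Diff)
    have d: "disjnt (ball x r - {0}) (ball y r - {0})"
      unfolding disjnt_iff
    proof (intro allI notI)
      fix z assume "z \<in> ball x r - {0} \<and> z \<in> ball y r - {0}"
      then have "dist x z < r" "dist y z < r" by auto
      moreover have "dist x y \<le> dist x z + dist z y" by (rule dist_triangle)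
      moreover have "dist z y = dist y z" by (rule dist_commute)
      ultimately show False using r_def by linarith
    qed
    have "x \<in> ball x r - {0}" "y \<in> ball y r - {0}" using r False by auto
    then show ?thesis using o1 o2 d by blast
  qed
qed

lemma coarser_TT: "openin (TT A) S \<Longrightarrow> open S"
  by (simp add: openin_TT openT_def)

lemma TT_in: "TT A \<in> coarser_Hausdorff_topologies"
  unfolding coarser_Hausdorff_topologies_def using topspace_TT Hausdorff_TT coarser_TT by blast

lemma not_regular_TT: "\<not> regular_space (TT A)"
proof
  assume reg: "regular_space (TT A)"
  define C where "C = {real n + 0 | n::nat. n \<ge> 1}"
  have "openT A (- C)"
    unfolding openT_def
  proof (intro conjI impI)
    have "closed C" unfolding C_def by (rule closed_shift_nats)
    then show "open (- C)" by (simp add: open_Compl)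
    have "C \<subseteq> DD A"
    proof
      fix x assume "x \<in> C"
      then obtain n :: nat where "x = real n + 0" "n \<ge> 1" unfolding C_def by blast
      then show "x \<in> DD A" unfolding DD_def by blast
    qed
    then show "\<exists>M. \<forall>x. M < x \<and> x \<notin> DD A \<longrightarrow> x \<in> - C" by blast
  qed
  then have "closedin (TT A) C" by (simp add: closedin_def topspace_TT openin_TT Compl_eq_Diff_UNIV)
  moreover have "0 \<in> topspace (TT A) - C" by (auto simp: C_def topspace_TT)
  ultimately obtain U V where UV: "openT A U" "openT A V" "0 \<in> U" "C \<subseteq> V" "disjnt U V"
    using reg unfolding regular_space_def openin_TT by blast
  then obtain M where M: "\<forall>x. M < x \<and> x \<notin> DD A \<longrightarrow> x \<in> U" by (auto simp: openT_def)
  define n where "n = nat \<lceil>M\<rceil> + 1"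
  have n1: "n \<ge> 1" and nM: "real n > M" unfolding n_def by linarith+
  have "real n \<in> V" using UV(4) n1 unfolding C_def by auto
  moreover have "open V" using UV(2) by (simp add: openT_def)
  ultimately obtain e where e: "e > 0" "ball (real n) e \<subseteq> V" by (meson openE)
  define x where "x = real n + min e (1/2) / 2"
  have "x \<in> V" using e unfolding x_def by (intro subsetD[OF e(2)]) (auto simp: dist_real_def)
  moreover have "x \<notin> DD A" by (rule DD_gap[OF n1]) (use e in \<open>auto simp: x_def\<close>)
  then have "x \<in> U" using M nM e unfolding x_def by auto
  ultimately show False using UV(5) by (auto simp: disjnt_def)
qed

lemma nonempty_sub:
  assumes "open W" "W \<noteq> {}" shows "openT A (W - {0}) \<and> W - {0} \<noteq> {}"
proof
  show "openT A (W - {0})" by (rule openT_no0[OF open_Diff[OF assms(1) closed_singleton]]) simp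
  show "W - {0} \<noteq> {}"
  proof
    assume e: "W - {0} = {}"
    have "W \<subseteq> {0}" using e by (simp add: Diff_eq_empty_iff)
    then have "W = {0}" using assms(2) by (metis subset_singletonD)
    then show False using assms(1) not_open_singleton by metis
  qed
qed

lemma dense_TT_imp: "TT A closure_of S = UNIV \<Longrightarrow> closure S = UNIV"
proof (rule ccontr)
  assume d: "TT A closure_of S = UNIV" and nd: "closure S \<noteq> UNIV"
  then obtain x where x: "x \<notin> closure S" by blast
  define W where "W = - closure S"
  have W1: "open W" unfolding W_def by (rule open_Compl[OF closed_closure])
  have W2: "W \<noteq> {}" using x unfolding W_def by blast
  have ne: "openT A (W - {0})" "W - {0} \<noteq> {}" using nonempty_sub[OF W1 W2] by blast+
  then obtain y where y: "y \<in> W - {0}" by blast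
  have yc: "y \<in> TT A closure_of S" using d by (metis UNIV_I)
  have oi: "openin (TT A) (W - {0})" using ne(1) openin_TT by metis
  obtain z where "z \<in> S" "z \<in> W - {0}"
    using yc y oi unfolding in_closure_of by metis
  then show False unfolding W_def using closure_subset by blast
qed

lemma dense_imp_TT: "closure S = UNIV \<Longrightarrow> TT A closure_of S = UNIV"
proof -
  assume d: "closure S = UNIV"
  { fix y
    have "y \<in> TT A closure_of S"
      unfolding in_closure_of openin_TT topspace_TT
    proof (intro conjI allI impI)
      fix T assume "y \<in> T \<and> openT A T"
      then have "open T" "T \<noteq> {}" by (auto simp: openT_def)
      then have "T \<inter> S \<noteq> {}" using d open_Int_closure_eq_empty[of T S] by auto
      then show "\<exists>y. y \<in> S \<and> y \<in> T" by auto
    qed simp }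
  then show ?thesis by auto
qed

lemma baire_TT: "baire_space (TT A)"
  unfolding baire_space_def topspace_TT
proof (intro allI impI)
  fix U :: "nat \<Rightarrow> real set"
  assume H: "\<forall>n. openin (TT A) (U n) \<and> TT A closure_of U n = UNIV"
  have ope: "openin (top_of_set UNIV) T \<and> UNIV \<subseteq> closure T" if "T \<in> range U" for T
  proof -
    obtain n where n: "T = U n" using \<open>T \<in> range U\<close> by blast
    have "TT A closure_of U n = UNIV" using H by blast
    then have "closure (U n) = UNIV" by (rule dense_TT_imp)
    moreover have "open (U n)" using H coarser_TT by blast
    ultimately show ?thesis using n by simp
  qed
  have "(UNIV::real set) \<subseteq> closure (\<Inter>(range U))"
    by (rule Baire[OF closed_UNIV]) (simp, rule ope)
  then have "closure (\<Inter>n. U n) = UNIV" by blast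
  then show "TT A closure_of (\<Inter>n. U n) = UNIV" by (rule dense_imp_TT)
qed

lemma TT_inj_aux:
  assumes "a \<in> A" "a \<notin> B" shows "TT A \<noteq> TT B"
proof
  assume eq: "TT A = TT B"
  define P where "P = {real n + gf a | n::nat. n \<ge> 1}"
  define W where "W = - P"
  have ga: "1/2 < gf a" "gf a < 1" by (rule gf_bounds)+
  have "openT A W"
    unfolding openT_def
  proof (intro conjI impI)
    have "closed P" unfolding P_def by (rule closed_shift_nats)
    then show "open W" unfolding W_def by (rule open_Compl)
    have "P \<subseteq> DD A"
    proof
      fix x assume "x \<in> P"
      then obtain n :: nat where "x = real n + gf a" "n \<ge> 1" unfolding P_def by blast
      then show "x \<in> DD A" using assms(1) DD_memI[of n "gf a" A] by blast
    qed
    then show "\<exists>M. \<forall>x. M < x \<and> x \<notin> DD A \<longrightarrow> x \<in> W" unfolding W_def by blast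
  qed
  then have oB: "openT B W" using eq openin_TT by metis
  have "0 \<notin> P"
  proof
    assume "0 \<in> P"
    then obtain n :: nat where "0 = real n + gf a" unfolding P_def by blast
    moreover have "0 \<le> real n" by simp
    ultimately show False using ga by linarith
  qed
  then have "0 \<in> W" unfolding W_def by blast
  then obtain M where M: "\<forall>x. M < x \<and> x \<notin> DD B \<longrightarrow> x \<in> W" using oB unfolding openT_def by blast
  define n where "n = nat \<lceil>M\<rceil> + 1"
  have n1: "n \<ge> 1" and nM: "real n > M" unfolding n_def by linarith+
  define x where "x = real n + gf a"
  have "x \<in> P" unfolding P_def x_def using n1 by blast
  then have "x \<notin> W" unfolding W_def by blast
  moreover have "M < x" using nM ga unfolding x_def by linarith
  moreover have "x \<notin> DD B"
  proof
    assume "x \<in> DD B"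
    then obtain m h where xm: "x = real m + h" and "m \<ge> 1" and h: "h = 0 \<or> h \<in> gf ` B"
      by (rule DD_E)
    have g0: "0 \<le> gf b" for b using gf_bounds(1)[of b] by linarith
    have g1: "gf b < 1" for b by (rule gf_bounds(2))
    have "0 \<le> h" "h < 1" using h g0 g1 by auto
    moreover have e: "real n + gf a = real m + h" using xm unfolding x_def by simp
    ultimately have nm: "n = m \<and> gf a = h" using frac_eq[OF e] ga g0[of a] by blast
    then have "h \<noteq> 0" using ga by linarith
    then obtain b where "b \<in> B" "h = gf b" using h by blast
    then have "a = b" using gf_inj nm by metis
    then show False using \<open>b \<in> B\<close> assms(2) by blast
  qed
  ultimately show False using M by blast
qed

lemma TT_inj: "inj TT"
proof (rule injI)
  fix A B assume eq: "TT A = TT B"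
  show "A = B"
  proof (rule ccontr)
    assume "A \<noteq> B"
    then obtain a where "(a \<in> A \<and> a \<notin> B) \<or> (a \<in> B \<and> a \<notin> A)" by blast
    then show False
    proof
      assume "a \<in> A \<and> a \<notin> B" then show False using TT_inj_aux[of a A B] eq by blast
    next
      assume "a \<in> B \<and> a \<notin> A" then show False using TT_inj_aux[of a B A] eq by simp
    qed
  qed
qed

theorem theorem2:
  shows "\<exists>F :: real topology set.
           F \<approx> (UNIV :: real set set) \<and>
           F \<subseteq> coarser_Hausdorff_topologies \<and>
           (\<forall>\<tau>\<in>F. baire_space \<tau> \<and> \<not> regular_space \<tau>) \<and>
           (\<forall>\<tau>\<in>F. \<forall>\<sigma>\<in>F. \<tau> \<noteq> \<sigma> \<longrightarrow> \<not> (\<tau> homeomorphic_space \<sigma>))"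
proof -
  define G where "G = range TT"
  have G: "G \<approx> (UNIV :: real set set)"
    unfolding G_def by (rule inj_on_image_eqpoll_self[OF TT_inj])
  have GL: "G \<subseteq> coarser_Hausdorff_topologies" unfolding G_def using TT_in by blast
  define rep :: "real topology \<Rightarrow> real topology" where "rep = (\<lambda>\<sigma>. SOME \<rho>. \<rho> \<in> G \<and> \<rho> homeomorphic_space \<sigma>)"
  have rep1: "rep \<sigma> \<in> G \<and> rep \<sigma> homeomorphic_space \<sigma>" if "\<sigma> \<in> G" for \<sigma>
  proof -
    have "\<exists>\<rho>. \<rho> \<in> G \<and> \<rho> homeomorphic_space \<sigma>" using that homeomorphic_space_refl by blast
    then show ?thesis unfolding rep_def by (rule someI_ex)
  qed
  have rep2: "rep \<sigma> = rep \<sigma>'" if "\<sigma> homeomorphic_space \<sigma>'" for \<sigma> \<sigma>' :: "real topology"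
  proof -
    have "(\<lambda>\<rho>. \<rho> \<in> G \<and> \<rho> homeomorphic_space \<sigma>) = (\<lambda>\<rho>. \<rho> \<in> G \<and> \<rho> homeomorphic_space \<sigma>')"
    proof (rule ext)
      fix \<rho> :: "real topology"
      have "\<rho> homeomorphic_space \<sigma> \<longleftrightarrow> \<rho> homeomorphic_space \<sigma>'"
        using that homeomorphic_space_trans homeomorphic_space_sym by metis
      then show "(\<rho> \<in> G \<and> \<rho> homeomorphic_space \<sigma>) = (\<rho> \<in> G \<and> \<rho> homeomorphic_space \<sigma>')" by simp
    qed
    then show ?thesis unfolding rep_def by simp
  qed
  define F where "F = rep ` G"
  have FG: "F \<subseteq> G" unfolding F_def using rep1 by blast
  have "\<forall>\<rho>\<in>coarser_Hausdorff_topologies. \<exists>\<phi>::real topology \<Rightarrow> real.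
          inj_on \<phi> {\<sigma> \<in> coarser_Hausdorff_topologies. \<rho> homeomorphic_space \<sigma>}"
  proof
    fix \<rho> assume r: "\<rho> \<in> coarser_Hausdorff_topologies"
    have "\<exists>\<phi>::real topology \<Rightarrow> real. inj_on \<phi> {\<sigma> \<in> coarser_Hausdorff_topologies. \<rho> homeomorphic_space \<sigma>}
            \<and> \<phi> ` {\<sigma> \<in> coarser_Hausdorff_topologies. \<rho> homeomorphic_space \<sigma>} \<subseteq> UNIV"
      using class_small[OF r] by (simp only: lepoll_def)
    then show "\<exists>\<phi>::real topology \<Rightarrow> real. inj_on \<phi> {\<sigma> \<in> coarser_Hausdorff_topologies. \<rho> homeomorphic_space \<sigma>}"
      by (elim exE conjE) (rule exI)
  qed
  from bchoice[OF this] obtain \<Phi> :: "real topology \<Rightarrow> real topology \<Rightarrow> real" where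
    Phi: "\<And>\<rho>. \<rho> \<in> coarser_Hausdorff_topologies \<Longrightarrow>
            inj_on (\<Phi> \<rho>) {\<sigma> \<in> coarser_Hausdorff_topologies. \<rho> homeomorphic_space \<sigma>}"
    by blast
  have I: "inj_on (\<lambda>\<sigma>. (rep \<sigma>, \<Phi> (rep \<sigma>) \<sigma>)) G"
  proof (rule inj_onI)
    fix \<sigma>1 \<sigma>2 assume s1: "\<sigma>1 \<in> G" and s2: "\<sigma>2 \<in> G"
      and eq: "(rep \<sigma>1, \<Phi> (rep \<sigma>1) \<sigma>1) = (rep \<sigma>2, \<Phi> (rep \<sigma>2) \<sigma>2)"
    let ?\<rho> = "rep \<sigma>1"
    have r: "rep \<sigma>2 = ?\<rho>" using eq by simp
    have "?\<rho> \<in> coarser_Hausdorff_topologies" using rep1[OF s1] GL by blast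
    then have inj: "inj_on (\<Phi> ?\<rho>) {\<sigma> \<in> coarser_Hausdorff_topologies. ?\<rho> homeomorphic_space \<sigma>}"
      by (rule Phi)
    have m1: "\<sigma>1 \<in> {\<sigma> \<in> coarser_Hausdorff_topologies. ?\<rho> homeomorphic_space \<sigma>}"
      using rep1[OF s1] s1 GL by blast
    have m2: "\<sigma>2 \<in> {\<sigma> \<in> coarser_Hausdorff_topologies. ?\<rho> homeomorphic_space \<sigma>}"
      using rep1[OF s2] s2 GL r by auto
    have "\<Phi> ?\<rho> \<sigma>1 = \<Phi> ?\<rho> \<sigma>2" using eq r by simp
    then show "\<sigma>1 = \<sigma>2" using inj m1 m2 by (meson inj_onD)
  qed
  have Sb: "(\<lambda>\<sigma>. (rep \<sigma>, \<Phi> (rep \<sigma>) \<sigma>)) ` G \<subseteq> F \<times> (UNIV::real set)"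
    unfolding F_def by (rule image_subsetI) simp
  have GF: "G \<lesssim> F \<times> (UNIV::real set)" by (rule lepollI[OF I Sb])
  have card: "F \<approx> (UNIV :: real set set)" by (rule counting[OF G FG GF])
  have props: "\<forall>\<tau>\<in>F. baire_space \<tau> \<and> \<not> regular_space \<tau>"
  proof
    fix \<tau> assume "\<tau> \<in> F"
    then obtain A where "\<tau> = TT A" using FG unfolding G_def by blast
    then show "baire_space \<tau> \<and> \<not> regular_space \<tau>" using baire_TT not_regular_TT by simp
  qed
  have nh: "\<forall>\<tau>\<in>F. \<forall>\<sigma>\<in>F. \<tau> \<noteq> \<sigma> \<longrightarrow> \<not> (\<tau> homeomorphic_space \<sigma>)"
  proof (intro ballI impI notI)
    fix \<tau> \<sigma> assume t: "\<tau> \<in> F" and s: "\<sigma> \<in> F" and ne: "\<tau> \<noteq> \<sigma>" and h: "\<tau> homeomorphic_space \<sigma>"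
    obtain \<tau>0 where t0: "\<tau>0 \<in> G" "\<tau> = rep \<tau>0" using t unfolding F_def by blast
    obtain \<sigma>0 where s0: "\<sigma>0 \<in> G" "\<sigma> = rep \<sigma>0" using s unfolding F_def by blast
    have "\<tau>0 homeomorphic_space \<tau>" using rep1[OF t0(1)] t0(2) homeomorphic_space_sym by blast
    also have "\<tau> homeomorphic_space \<sigma>" by (rule h)
    also have "\<sigma> homeomorphic_space \<sigma>0" using rep1[OF s0(1)] s0(2) by blast
    finally have "rep \<tau>0 = rep \<sigma>0" by (rule rep2)
    then show False using ne t0 s0 by simp
  qed
  have FL: "F \<subseteq> coarser_Hausdorff_topologies" using FG GL by (rule order_trans)
  show ?thesis by (rule exI[of _ F]) (intro conjI card FL props nh)
qed

end
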